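(* Let $s,r,R$ be positive integers with $s\ge 2$, and let $\delta=(r+1)(R+1)-sr-1$. Suppose $\delta\ge 1$ and $R+1\le sr$ (so that $B(R)\neq\mathbb F_q^{s\times r}$). Then there exists an $R$-sticky vector $m\in\mathbb F_q^{s\times r}$ for $B(R)$; i.e. there is $m\notin B(R)$ such that every ball $B(c,R)$ containing $m$ intersects $B(R)$. Consequently, for $\delta\ge 1$ there are no non-trivial $R$-perfect codes in $\mathbb F_q^{s\times r}$ with respect to the NRT metric.
   Context: $q$ is a prime power, $\mathbb F_q^{s\times r}$ the set of $s\times r$ matrices over $\mathbb F_q$ with rows $x_1,\dots,x_s\in\mathbb F_q^{1\times r}$. For a row $y=(y_1,\dots,y_r)$, the NRT weight is $w(y)=\max\{j: y_j\neq 0\}$ if $y\neq 0$ and $w(0)=0$; for a matrix $x$, $w(x)=\sum_i w(x_i)$. The NRT metric is $d(x,y)=w(x-y)$; $B(c,R)=\{x: d(x,c)\le R\}$, $B(R)=B(0,R)$. The $R$-closure of $S$ is the set of points $p$ such that every ball of radius $R$ containing $p$ contains some point of $S$; elements of the $R$-closure of $S$ not in $S$ are called $R$-sticky vectors for $S$. A code $C\subseteq\mathbb F_q^{s\times r}$ is $R$-perfect if the balls $B(c,R)$, $c\in C$, are pairwise disjoint and cover $\mathbb F_q^{s\times r}$; it is non-trivial if $|C|>1$ and $C\ne\mathbb F_q^{s\times r}$. *)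

theory Defs
  imports Main
begin

text \<open>Matrices in F^{s x r} are represented as functions nat => nat => 'a
  (row index i < s, column index j < r, 0-based) vanishing outside the box.\<close>

definition mats :: "nat \<Rightarrow> nat \<Rightarrow> (nat \<Rightarrow> nat \<Rightarrow> 'a::zero) set" where
  "mats s r = {x. \<forall>i j. (s \<le> i \<or> r \<le> j) \<longrightarrow> x i j = 0}"

definition row_wt :: "nat \<Rightarrow> (nat \<Rightarrow> 'a::zero) \<Rightarrow> nat" where
  "row_wt r y = (if \<forall>j<r. y j = 0 then 0 else Suc (Max {j. j < r \<and> y j \<noteq> 0}))"

definition nrt_wt :: "nat \<Rightarrow> nat \<Rightarrow> (nat \<Rightarrow> nat \<Rightarrow> 'a::zero) \<Rightarrow> nat" where
  "nrt_wt s r x = (\<Sum>i<s. row_wt r (x i))"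

definition nrt_dist :: "nat \<Rightarrow> nat \<Rightarrow> (nat \<Rightarrow> nat \<Rightarrow> 'a::ab_group_add) \<Rightarrow> (nat \<Rightarrow> nat \<Rightarrow> 'a) \<Rightarrow> nat" where
  "nrt_dist s r x y = nrt_wt s r (\<lambda>i j. x i j - y i j)"

definition nrt_ball :: "nat \<Rightarrow> nat \<Rightarrow> (nat \<Rightarrow> nat \<Rightarrow> 'a::ab_group_add) \<Rightarrow> nat \<Rightarrow> (nat \<Rightarrow> nat \<Rightarrow> 'a) set" where
  "nrt_ball s r c R = {x \<in> mats s r. nrt_dist s r x c \<le> R}"

definition nrt_closure :: "nat \<Rightarrow> nat \<Rightarrow> nat \<Rightarrow> (nat \<Rightarrow> nat \<Rightarrow> 'a::ab_group_add) set \<Rightarrow> (nat \<Rightarrow> nat \<Rightarrow> 'a) set" where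
  "nrt_closure s r R S = {p \<in> mats s r. \<forall>c \<in> mats s r. p \<in> nrt_ball s r c R \<longrightarrow> nrt_ball s r c R \<inter> S \<noteq> {}}"

definition sticky :: "nat \<Rightarrow> nat \<Rightarrow> nat \<Rightarrow> (nat \<Rightarrow> nat \<Rightarrow> 'a::ab_group_add) set \<Rightarrow> (nat \<Rightarrow> nat \<Rightarrow> 'a) \<Rightarrow> bool" where
  "sticky s r R S m \<longleftrightarrow> m \<in> nrt_closure s r R S \<and> m \<notin> S"

definition perfect_code :: "nat \<Rightarrow> nat \<Rightarrow> nat \<Rightarrow> (nat \<Rightarrow> nat \<Rightarrow> 'a::ab_group_add) set \<Rightarrow> bool" where
  "perfect_code s r R C \<longleftrightarrow> C \<subseteq> mats s r
     \<and> (\<forall>c\<in>C. \<forall>c'\<in>C. c \<noteq> c' \<longrightarrow> nrt_ball s r c R \<inter> nrt_ball s r c' R = {})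
     \<and> (\<Union>c\<in>C. nrt_ball s r c R) = mats s r"

definition nontrivial_code :: "nat \<Rightarrow> nat \<Rightarrow> (nat \<Rightarrow> nat \<Rightarrow> 'a::zero) set \<Rightarrow> bool" where
  "nontrivial_code s r C \<longleftrightarrow> card C > 1 \<and> C \<noteq> mats s r"

end

theory Submission
  imports Defs
begin

lemma row_wt_le: "row_wt r y \<le> k \<longleftrightarrow> (\<forall>j. k \<le> j \<longrightarrow> j < r \<longrightarrow> y j = 0)"
proof (cases "\<forall>j<r. y j = 0")
  case True then show ?thesis by (auto simp: row_wt_def)
next
  case False
  let ?S = "{j. j < r \<and> y j \<noteq> 0}"
  have fin: "finite ?S" by (rule finite_subset[of _ "{..<r}"]) auto
  have ne: "?S \<noteq> {}" using False by auto
  have eq: "row_wt r y = Suc (Max ?S)" using False by (simp add: row_wt_def)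
  have "Suc (Max ?S) \<le> k \<longleftrightarrow> (\<forall>j\<in>?S. j < k)"
    using Max_less_iff[OF fin ne, of k] by (simp add: Suc_le_eq)
  then show ?thesis unfolding eq by (auto simp: not_less)
qed

lemma row_wt_eqI: "(\<And>k. row_wt r u \<le> k \<longleftrightarrow> row_wt r v \<le> k) \<Longrightarrow> row_wt r u = row_wt r v"
  by (meson le_antisym order_refl)

lemma row_wt_add: "row_wt r (\<lambda>j. u j + v j) \<le> max (row_wt r u) (row_wt r (v::nat\<Rightarrow>'a::ab_group_add))"
  using row_wt_le[of r u "max (row_wt r u) (row_wt r v)"] row_wt_le[of r v "max (row_wt r u) (row_wt r v)"]
    row_wt_le[of r "\<lambda>j. u j + v j" "max (row_wt r u) (row_wt r v)"] by auto

lemma row_wt_minus: "row_wt r (\<lambda>j. - u j) = row_wt r (u::nat\<Rightarrow>'a::ab_group_add)"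
  by (rule row_wt_eqI) (simp add: row_wt_le)

lemma row_wt_zero: "row_wt r (\<lambda>j. 0) = 0"
  by (simp add: row_wt_def)

lemma row_wt_le_r: "row_wt r y \<le> r"
  by (simp add: row_wt_le)

lemma row_wt_c: "row_wt r c \<le> max (row_wt r m) (row_wt r (\<lambda>j. m j - (c j::'a::ab_group_add)))"
proof -
  have "c = (\<lambda>j. m j + - (m j - c j))" by auto
  then have "row_wt r c = row_wt r (\<lambda>j. m j + - (m j - c j))" by simp
  also have "\<dots> \<le> max (row_wt r m) (row_wt r (\<lambda>j. - (m j - c j)))" by (rule row_wt_add)
  also have "row_wt r (\<lambda>j. - (m j - c j)) = row_wt r (\<lambda>j. m j - c j)" by (rule row_wt_minus)
  finally show ?thesis .
qed

lemma row_wt_same: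
  assumes "row_wt r (\<lambda>j. m j - c j) < row_wt r (m::nat\<Rightarrow>'a::ab_group_add)"
  shows "row_wt r c = row_wt r m"
proof -
  have 1: "row_wt r c \<le> max (row_wt r m) (row_wt r (\<lambda>j. m j - c j))" by (rule row_wt_c)
  have 2: "row_wt r m \<le> max (row_wt r c) (row_wt r (\<lambda>j. c j - m j))" by (rule row_wt_c)
  have "(\<lambda>j. c j - m j) = (\<lambda>j. - (m j - c j))" by auto
  then have 3: "row_wt r (\<lambda>j. c j - m j) = row_wt r (\<lambda>j. m j - c j)" using row_wt_minus by metis
  show ?thesis using 1 2 3 assms by linarith
qed

lemma sel_wt: "row_wt r (\<lambda>j. if P then (c j :: 'a::ab_group_add) else 0) = (if P then row_wt r c else 0)"
  by (cases P) (simp_all add: row_wt_zero)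

lemma sel_dist: "row_wt r (\<lambda>j. (if P then c j else 0) - (c j :: 'a::ab_group_add)) = (if P then 0 else row_wt r c)"
  by (cases P) (simp_all add: row_wt_zero row_wt_minus)

lemma sum_split_one:
  fixes f :: "nat \<Rightarrow> nat"
  assumes "i0 < s"
  shows "(\<Sum>i<s. f i) = f i0 + (\<Sum>i<s. if i = i0 then 0 else f i)"
proof -
  have "(\<Sum>i<s. f i) = (\<Sum>i<s. (if i = i0 then f i else 0) + (if i = i0 then 0 else f i))"
    by (rule sum.cong) auto
  also have "\<dots> = (\<Sum>i<s. (if i = i0 then f i else 0)) + (\<Sum>i<s. if i = i0 then 0 else f i)"
    by (rule sum.distrib)
  finally show ?thesis using assms by simp
qed

lemma exists_t:
  assumes "s \<le> N" "N \<le> s * r"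
  shows "\<exists>t::nat\<Rightarrow>nat. (\<forall>i<s. 1 \<le> t i \<and> t i \<le> r) \<and> (\<Sum>i<s. t i) = N"
  using assms(1)
proof (induction N rule: dec_induct)
  case base
  have "r \<ge> 1 \<or> s = 0" using assms by (cases r) auto
  then show ?case by (intro exI[of _ "\<lambda>_. 1"]) auto
next
  case (step n)
  then obtain t where t: "\<forall>i<s. 1 \<le> t i \<and> t i \<le> r" "(\<Sum>i<s. t i) = n" by auto
  have "\<exists>i<s. t i < r"
  proof (rule ccontr)
    assume na: "\<not> ?thesis"
    have "(\<Sum>i<s. r) \<le> (\<Sum>i<s. t i)"
    proof (rule sum_mono)
      fix i assume "i \<in> {..<s}" then show "r \<le> t i" using na by (metis lessThan_iff not_less)
    qed
    then show False using t step assms by simp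
  qed
  then obtain i where i: "i < s" "t i < r" by auto
  define t' where "t' = t(i := Suc (t i))"
  have "(\<Sum>k<s. t' k) = (\<Sum>k<s. t k + (if k = i then 1 else 0))"
    by (rule sum.cong) (auto simp: t'_def)
  also have "\<dots> = (\<Sum>k<s. t k) + 1" using i by (simp add: sum.distrib)
  finally have "(\<Sum>k<s. t' k) = Suc n" using t by simp
  moreover have "\<forall>k<s. 1 \<le> t' k \<and> t' k \<le> r" using t i by (auto simp: t'_def)
  ultimately show ?case by blast
qed

definition mk :: "nat \<Rightarrow> (nat\<Rightarrow>nat) \<Rightarrow> nat \<Rightarrow> nat \<Rightarrow> 'a::zero_neq_one" where
  "mk s t i j = (if i < s \<and> Suc j = t i then 1 else 0)"

lemma mk_mats: "\<forall>i<s. t i \<le> r \<Longrightarrow> mk s t \<in> mats s r"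
  by (auto simp: mats_def mk_def)

lemma mk_row:
  assumes "1 \<le> t i" "t i \<le> r" "i < s"
  shows "row_wt r (mk s t i :: nat \<Rightarrow> 'a::{zero_neq_one}) = t i"
proof -
  have 1: "row_wt r (mk s t i :: nat \<Rightarrow> 'a) \<le> t i" by (auto simp: row_wt_le mk_def)
  have "(mk s t i (t i - 1) :: 'a) \<noteq> 0" using assms by (simp add: mk_def)
  moreover have "t i - 1 < r" using assms by simp
  ultimately have "\<not> row_wt r (mk s t i :: nat \<Rightarrow> 'a) \<le> t i - 1"
    unfolding row_wt_le by blast
  with 1 show ?thesis by simp
qed


definition good :: "nat \<Rightarrow> nat \<Rightarrow> nat \<Rightarrow> (nat\<Rightarrow>nat\<Rightarrow>'a::ab_group_add) \<Rightarrow> bool" where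
  "good s r R m \<longleftrightarrow> m \<in> mats s r \<and> R < nrt_wt s r m \<and>
     (\<forall>c\<in>mats s r. nrt_dist s r m c \<le> R \<longrightarrow> (\<exists>x\<in>mats s r. nrt_dist s r x c \<le> R \<and> nrt_wt s r x \<le> R))"

lemma caseA:
  assumes "0 < r" "2 \<le> s" "s \<le> R + 1" "R + 1 \<le> s * r"
  shows "\<exists>m::nat\<Rightarrow>nat\<Rightarrow>'a::{ab_group_add,zero_neq_one}. good s r R m"
proof -
  obtain t where t: "\<forall>i<s. 1 \<le> t i \<and> t i \<le> r" "(\<Sum>i<s. t i) = R + 1"
    using exists_t[of s "R+1" r] assms by auto
  define m where "m = (mk s t :: nat\<Rightarrow>nat\<Rightarrow>'a)"
  have mm: "m \<in> mats s r" using t by (simp add: m_def mk_mats)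
  have mrow: "\<And>i. i<s \<Longrightarrow> row_wt r (m i) = t i" using t by (simp add: m_def mk_row)
  have wm: "nrt_wt s r m = R + 1" using t mrow by (simp add: nrt_wt_def)
  have tR: "t i \<le> R" if i: "i < s" for i
  proof -
    define i' where "i' = (if i = 0 then 1 else (0::nat))"
    have i': "i' < s" "i' \<noteq> i" using assms i by (auto simp: i'_def)
    have "(\<Sum>k\<in>{i,i'}. t k) \<le> (\<Sum>k<s. t k)" by (rule sum_mono2) (use i i' in auto)
    then show ?thesis using i' t i by auto
  qed
  show ?thesis unfolding good_def
  proof (intro exI[of _ m] conjI ballI impI)
    show "m \<in> mats s r" by (rule mm)
    show "R < nrt_wt s r m" using wm by simp
    fix c :: "nat\<Rightarrow>nat\<Rightarrow>'a" assume c: "c \<in> mats s r" and dmc: "nrt_dist s r m c \<le> R"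
    define d where "d i = row_wt r (\<lambda>j. m i j - c i j)" for i
    have D: "(\<Sum>i<s. d i) \<le> R" using dmc by (simp add: nrt_dist_def nrt_wt_def d_def)
    show "\<exists>x\<in>mats s r. nrt_dist s r x c \<le> R \<and> nrt_wt s r x \<le> R"
    proof (cases "\<exists>i0<s. t i0 \<le> d i0")
      case True
      then obtain i0 where i0: "i0 < s" "t i0 \<le> d i0" by auto
      define x where "x = (\<lambda>i j. if i = i0 then 0 else m i j)"
      have xm: "x \<in> mats s r" using mm by (auto simp: mats_def x_def)
      have wx: "nrt_wt s r x = (\<Sum>i<s. if i = i0 then 0 else t i)"
        unfolding nrt_wt_def by (rule sum.cong) (auto simp: x_def mrow row_wt_zero)
      have "nrt_wt s r x + t i0 = R + 1" using sum_split_one[of i0 s t] t(2) i0 wx by simp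
      then have w: "nrt_wt s r x \<le> R" using t i0 by force
      have "nrt_dist s r x c \<le> (\<Sum>i<s. d i)" unfolding nrt_dist_def nrt_wt_def
      proof (rule sum_mono)
        fix i assume "i \<in> {..<s}"
        show "row_wt r (\<lambda>j. x i j - c i j) \<le> d i"
        proof (cases "i = i0")
          case True
          have "row_wt r (\<lambda>j. x i j - c i j) = row_wt r (c i)"
            using True row_wt_minus[of r "c i"] by (simp add: x_def)
          also have "\<dots> \<le> max (row_wt r (m i)) (d i)" unfolding d_def by (rule row_wt_c)
          finally show ?thesis using True i0 mrow by simp
        next
          case False then show ?thesis by (simp add: x_def d_def)
        qed
      qed
      then show ?thesis using xm w D by (meson order_trans)
    next
      case False
      then have dl: "\<And>i. i < s \<Longrightarrow> d i < t i" by (auto simp: not_le)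
      have crow: "row_wt r (c i) = t i" if "i < s" for i
        using row_wt_same[of r "m i" "c i"] dl[OF that] mrow[OF that] by (simp add: d_def)
      define x where "x = (\<lambda>i j. if i \<noteq> 0 then c i j else 0)"
      have xm: "x \<in> mats s r" using c by (auto simp: mats_def x_def)
      have wx: "nrt_wt s r x = (\<Sum>i<s. if i = 0 then 0 else t i)"
        unfolding nrt_wt_def by (rule sum.cong) (auto simp: x_def sel_wt crow)
      have "nrt_wt s r x + t 0 = R + 1" using sum_split_one[of 0 s t] t(2) assms wx by simp
      then have w: "nrt_wt s r x \<le> R" using t assms by force
      have "nrt_dist s r x c = (\<Sum>i<s. if i = 0 then t i else 0)"
        unfolding nrt_dist_def nrt_wt_def by (rule sum.cong) (auto simp: x_def sel_dist crow)
      also have "\<dots> = t 0" using assms by simp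
      finally have "nrt_dist s r x c \<le> R" using tR assms by simp
      then show ?thesis using xm w by auto
    qed
  qed
qed


lemma caseB:
  assumes "0 < r" "R + 1 < s" "r * (s - R - 1) + 1 \<le> R"
  shows "\<exists>m::nat\<Rightarrow>nat\<Rightarrow>'a::{ab_group_add,zero_neq_one}. good s r R m"
proof -
  define t where "t = (\<lambda>_::nat. 1::nat)"
  have t: "\<forall>i<s. 1 \<le> t i \<and> t i \<le> r" using assms by (simp add: t_def)
  define m where "m = (mk s t :: nat\<Rightarrow>nat\<Rightarrow>'a)"
  have mm: "m \<in> mats s r" using t by (simp add: m_def mk_mats)
  have mrow: "\<And>i. i<s \<Longrightarrow> row_wt r (m i) = 1" using t unfolding m_def by (metis mk_row t_def)
  have wm: "nrt_wt s r m = s" using mrow by (simp add: nrt_wt_def)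
  show ?thesis unfolding good_def
  proof (intro exI[of _ m] conjI ballI impI)
    show "m \<in> mats s r" by (rule mm)
    show "R < nrt_wt s r m" using wm assms by simp
    fix c :: "nat\<Rightarrow>nat\<Rightarrow>'a" assume c: "c \<in> mats s r" and dmc: "nrt_dist s r m c \<le> R"
    define d where "d i = row_wt r (\<lambda>j. m i j - c i j)" for i
    have D: "(\<Sum>i<s. d i) \<le> R" using dmc by (simp add: nrt_dist_def nrt_wt_def d_def)
    define B where "B = {i. i < s \<and> 1 \<le> d i}"
    define N where "N = {i. i < s \<and> d i = 0}"
    have cN: "row_wt r (c i) = 1" if "i \<in> N" for i
      using row_wt_same[of r "m i" "c i"] that mrow[of i] by (simp add: d_def N_def)
    have cB: "row_wt r (c i) \<le> d i" if "i \<in> B" for i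
      using row_wt_c[of r "c i" "m i"] that mrow[of i] by (simp add: d_def B_def)
    have finB: "finite B" and finN: "finite N" by (simp_all add: B_def N_def)
    have "B \<union> N = {..<s}" "B \<inter> N = {}" by (auto simp: B_def N_def)
    then have cardBN: "card B + card N = s" using card_Un_disjoint[OF finB finN] by simp
    have "(\<Sum>i<s. d i) = (\<Sum>i\<in>B. d i)"
      by (rule sum.mono_neutral_right) (auto simp: B_def)
    also have "\<dots> \<le> of_nat (card B) * r"
      by (rule sum_bounded_above) (simp add: d_def row_wt_le_r)
    finally have DB: "(\<Sum>i<s. d i) \<le> card B * r" by simp
    define Dt where "Dt = (\<Sum>i<s. d i)"
    define k where "k = min (card N) (R - Dt)"
    obtain K where K: "K \<subseteq> N" "card K = k" "finite K"
      using obtain_subset_with_card_n[of k N] by (auto simp: k_def)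
    define x where "x = (\<lambda>i j. if i \<in> B \<union> K then c i j else 0)"
    have xm: "x \<in> mats s r" using c by (auto simp: mats_def x_def)
    have "nrt_wt s r x = (\<Sum>i<s. if i \<in> B \<union> K then row_wt r (c i) else 0)"
      unfolding nrt_wt_def by (rule sum.cong) (auto simp: x_def sel_wt)
    also have "\<dots> \<le> (\<Sum>i<s. (if i \<in> B then d i else 0) + (if i \<in> K then 1 else 0))"
    proof (rule sum_mono)
      fix i assume "i \<in> {..<s}"
      show "(if i \<in> B \<union> K then row_wt r (c i) else 0) \<le> (if i \<in> B then d i else 0) + (if i \<in> K then 1 else 0)"
        using cB[of i] cN[of i] K(1) by (auto simp: B_def N_def)
    qed
    also have "\<dots> = (\<Sum>i<s. (if i \<in> B then d i else 0)) + (\<Sum>i<s. (if i \<in> K then 1 else 0))"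
      by (rule sum.distrib)
    also have "(\<Sum>i<s. (if i \<in> K then 1 else 0)) = card K"
    proof -
      have "(\<Sum>i<s. (if i \<in> K then 1 else 0)) = (\<Sum>i\<in>{..<s} \<inter> K. 1::nat)"
        by (rule sum.inter_restrict[symmetric]) simp
      also have "{..<s} \<inter> K = K" using K(1) by (auto simp: N_def)
      finally show ?thesis by simp
    qed
    also have "(\<Sum>i<s. (if i \<in> B then d i else 0)) \<le> Dt"
      unfolding Dt_def by (rule sum_mono) auto
    finally have wx: "nrt_wt s r x \<le> Dt + card K" by simp
    have "nrt_dist s r x c = (\<Sum>i<s. if i \<in> B \<union> K then 0 else row_wt r (c i))"
      unfolding nrt_dist_def nrt_wt_def by (rule sum.cong) (auto simp: x_def sel_dist)
    also have "\<dots> = (\<Sum>i<s. if i \<in> N - K then 1 else 0)"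
      by (rule sum.cong) (auto simp: cN B_def N_def)
    also have "\<dots> = (\<Sum>i\<in>{..<s} \<inter> (N - K). 1::nat)"
      by (rule sum.inter_restrict[symmetric]) simp
    also have "{..<s} \<inter> (N - K) = N - K" by (auto simp: N_def)
    also have "(\<Sum>i\<in>N - K. 1::nat) = card N - card K"
      using K finN by (simp add: card_Diff_subset)
    finally have dx: "nrt_dist s r x c = card N - card K" .
    have DtR: "Dt \<le> R" using D by (simp add: Dt_def)
    have DtB: "Dt \<le> card B * r" using DB by (simp add: Dt_def)
    have w: "nrt_wt s r x \<le> R" using wx K DtR by (simp add: k_def)
    have key: "(s - R - 1) + 1 + Dt \<le> R + card B"
    proof (cases "s - R - 1 < card B")
      case True then show ?thesis using DtR by simp
    next
      case False
      define e where "e = s - R - 1"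
      have be: "card B \<le> e" using False by (simp add: e_def)
      have "(e - card B) * 1 \<le> (e - card B) * r" using assms by (intro mult_le_mono2) simp
      moreover have "(e - card B) * r + card B * r = e * r" using be
        by (simp add: add_mult_distrib[symmetric])
      moreover have "e * r + 1 \<le> R" using assms by (simp add: e_def mult.commute)
      ultimately have "card B * r + e + 1 \<le> R + card B" using be by linarith
      then show ?thesis using DtB by (simp add: e_def)
    qed
    have "nrt_dist s r x c \<le> R"
    proof (cases "card N \<le> R - Dt")
      case True then show ?thesis using dx K by (simp add: k_def)
    next
      case False
      then have "card K = R - Dt" using K by (simp add: k_def)
      then show ?thesis using dx key cardBN assms DtR by simp
    qed
    then show "\<exists>x\<in>mats s r. nrt_dist s r x c \<le> R \<and> nrt_wt s r x \<le> R" using xm w by blast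
  qed
qed


lemma good_exists:
  fixes s r R :: nat
  assumes "0 < r" "s \<ge> 2"
    and "(int r + 1) * (int R + 1) - int s * int r - 1 \<ge> 1"
    and "R + 1 \<le> s * r"
  shows "\<exists>m::nat\<Rightarrow>nat\<Rightarrow>'a::{ab_group_add,zero_neq_one}. good s r R m"
proof (cases "s \<le> R + 1")
  case True then show ?thesis using caseA assms by blast
next
  case False
  then obtain e where e: "s = R + 1 + e" by (metis le_add_diff_inverse nat_le_linear)
  have "int (s * r + 2) \<le> int ((r+1)*(R+1))" using assms(3) by (simp add: algebra_simps)
  then have "s * r + 2 \<le> (r+1)*(R+1)" by linarith
  then have "r * e + 1 \<le> R" unfolding e by (simp add: algebra_simps)
  then have "r * (s - R - 1) + 1 \<le> R" using e by simp
  then show ?thesis using caseB[of r R s] assms(1) False by (simp add: not_le)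
qed

lemma dist_shift:
  "nrt_dist s r (\<lambda>i j. x i j + a i j) (\<lambda>i j. y i j + a i j) = nrt_dist s r x (y :: nat\<Rightarrow>nat\<Rightarrow>'a::ab_group_add)"
  by (simp add: nrt_dist_def)

theorem mainTheorem5:
  fixes s r R :: nat
  assumes "0 < s" "0 < r" "0 < R" "s \<ge> 2"
    and "(int r + 1) * (int R + 1) - int s * int r - 1 \<ge> 1"
    and "R + 1 \<le> s * r"
  shows "(\<exists>m :: nat \<Rightarrow> nat \<Rightarrow> 'a::{finite,field}.
            sticky s r R (nrt_ball s r (\<lambda>i j. 0) R) m)
       \<and> \<not> (\<exists>C :: (nat \<Rightarrow> nat \<Rightarrow> 'a::{finite,field}) set.
            perfect_code s r R C \<and> nontrivial_code s r C)"
proof -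
  obtain m :: "nat\<Rightarrow>nat\<Rightarrow>'a" where g: "good s r R m"
    using good_exists[of r s R] assms by blast
  have d0: "nrt_dist s r x (\<lambda>i j. 0) = nrt_wt s r x" for x :: "nat\<Rightarrow>nat\<Rightarrow>'a"
    by (simp add: nrt_dist_def)
  have st: "sticky s r R (nrt_ball s r (\<lambda>i j. 0) R) m"
    using g unfolding sticky_def nrt_closure_def nrt_ball_def good_def
    by (auto simp: d0)
  have "\<not> (perfect_code s r R C \<and> nontrivial_code s r C)" for C :: "(nat \<Rightarrow> nat \<Rightarrow> 'a) set"
  proof
    assume H: "perfect_code s r R C \<and> nontrivial_code s r C"
    have P1: "C \<subseteq> mats s r" using H unfolding perfect_code_def by simp
    have P2: "\<And>c c'. c \<in> C \<Longrightarrow> c' \<in> C \<Longrightarrow> c \<noteq> c' \<Longrightarrow> nrt_ball s r c R \<inter> nrt_ball s r c' R = {}"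
      using H unfolding perfect_code_def by simp
    have P3: "(\<Union>c\<in>C. nrt_ball s r c R) = mats s r" using H unfolding perfect_code_def by simp
    have cardC: "card C > 1" using H unfolding nontrivial_code_def by simp
    then have "C \<noteq> {}" by (metis card.empty not_one_less_zero)
    then obtain c0 where c0: "c0 \<in> C" by blast
    have mm: "m \<in> mats s r" and mw: "R < nrt_wt s r m"
      and mst: "\<And>c. c \<in> mats s r \<Longrightarrow> nrt_dist s r m c \<le> R \<Longrightarrow> \<exists>x\<in>mats s r. nrt_dist s r x c \<le> R \<and> nrt_wt s r x \<le> R"
      using g unfolding good_def by blast+
    define m' where "m' = (\<lambda>i j. m i j + c0 i j)"
    have c0m: "c0 \<in> mats s r" using c0 P1 by blast
    have "m' \<in> mats s r" using mm c0m by (auto simp: mats_def m'_def)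
    then obtain c where c: "c \<in> C" "m' \<in> nrt_ball s r c R" using P3 by blast
    have cm: "c \<in> mats s r" using c P1 by blast
    define c' where "c' = (\<lambda>i j. c i j - c0 i j)"
    have c'm: "c' \<in> mats s r" using cm c0m by (auto simp: mats_def c'_def)
    have cc': "c = (\<lambda>i j. c' i j + c0 i j)" by (simp add: c'_def)
    have "nrt_dist s r m' c = nrt_dist s r m c'"
      unfolding m'_def cc' by (rule dist_shift)
    then have dmc: "nrt_dist s r m c' \<le> R" using c by (simp add: nrt_ball_def)
    have "c \<noteq> c0"
    proof
      assume "c = c0"
      then have "c' = (\<lambda>i j. 0)" by (simp add: c'_def)
      then show False using dmc mw d0 by simp
    qed
    obtain x where x: "x \<in> mats s r" "nrt_dist s r x c' \<le> R" "nrt_wt s r x \<le> R"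
      using mst[OF c'm dmc] by blast
    define x' where "x' = (\<lambda>i j. x i j + c0 i j)"
    have x'm: "x' \<in> mats s r" using x c0m by (auto simp: mats_def x'_def)
    have "nrt_dist s r x' c = nrt_dist s r x c'" unfolding x'_def cc' by (rule dist_shift)
    moreover have "nrt_dist s r x' c0 = nrt_wt s r x"
    proof -
      have "nrt_dist s r x' c0 = nrt_dist s r x (\<lambda>i j. 0)"
        using dist_shift[of s r x c0 "\<lambda>i j. 0"] by (simp add: x'_def)
      then show ?thesis using d0 by simp
    qed
    ultimately have "x' \<in> nrt_ball s r c R \<inter> nrt_ball s r c0 R"
      using x x'm by (simp add: nrt_ball_def)
    then show False using P2[OF c(1) c0 \<open>c \<noteq> c0\<close>] by blast
  qed
  then show ?thesis using st by blast
qed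

end
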